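(* Let $\lambda_0,\dots,\lambda_n\in\mathbb{C}$, $n\ge1$, $a\neq b$ real, and suppose $E_{(\lambda_0,\dots,\lambda_n)}$ and $E_{(\lambda_0,\dots,\lambda_{n-1})}$ are extended Chebyshev systems for $\{a,b\}$. For $k=0,\dots,n-1$ let $$d_k:=\lim_{x\to b}\frac{\frac{d}{dx}p_{(\lambda_0,\dots,\lambda_n),k}(x)}{p_{(\lambda_0,\dots,\lambda_{n-1}),k}(x)}$$ (these limits exist and are nonzero). Then for all $x\in\mathbb{R}$ $$e^{(x-a)\lambda_n}=p_{(\lambda_0,\dots,\lambda_n),0}(x)+\sum_{k=1}^n(-1)^k d_0\cdots d_{k-1}\,p_{(\lambda_0,\dots,\lambda_n),k}(x),$$ and for $k=1,\dots,n-1$, $$d_0\cdots d_{k-1}=(-1)^n\frac{e^{(b-a)\lambda_n}}{p_{(\lambda_0,\dots,\lambda_n),n}(b)}\cdot\frac{1}{d_k\cdots d_{n-1}}.$$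
   Context: $E_{(\lambda_0,\dots,\lambda_m)}$ denotes the space of all $f\in C^\infty(\mathbb{R},\mathbb{C})$ with $(\frac{d}{dx}-\lambda_0)\cdots(\frac{d}{dx}-\lambda_m)f=0$ (dimension $m+1$). A zero of order (exactly) $k$ at $a$ means $f(a)=\dots=f^{(k-1)}(a)=0$, $f^{(k)}(a)\neq0$. $E_{(\lambda_0,\dots,\lambda_m)}$ is an extended Chebyshev system for $A\subset\mathbb{R}$ if every nonzero element has at most $m$ zeros in $A$ counted with multiplicity. In that case, for $A=\{a,b\}$, $a\ne b$, the Bernstein basis $p_{(\lambda_0,\dots,\lambda_m),k}$, $k=0,\dots,m$, is the unique family in $E_{(\lambda_0,\dots,\lambda_m)}$ with $p_{(\lambda_0,\dots,\lambda_m),k}$ having a zero of order exactly $k$ at $a$ and exactly $m-k$ at $b$, and $p^{(k)}_{(\lambda_0,\dots,\lambda_m),k}(a)=1$. *)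

theory Defs
  imports "HOL-Analysis.Analysis"
begin

fun dn :: "nat \<Rightarrow> (real \<Rightarrow> complex) \<Rightarrow> real \<Rightarrow> complex" where
  "dn 0 f = f"
| "dn (Suc k) f = (\<lambda>x. vector_derivative (dn k f) (at x))"

definition smooth :: "(real \<Rightarrow> complex) \<Rightarrow> bool" where
  "smooth f \<longleftrightarrow> (\<forall>k x. (dn k f has_vector_derivative dn (Suc k) f x) (at x))"

definition Dm :: "complex \<Rightarrow> (real \<Rightarrow> complex) \<Rightarrow> real \<Rightarrow> complex" where
  "Dm l f = (\<lambda>x. vector_derivative f (at x) - l * f x)"

fun ode_op :: "complex list \<Rightarrow> (real \<Rightarrow> complex) \<Rightarrow> real \<Rightarrow> complex" where
  "ode_op [] f = f"
| "ode_op (l # ls) f = Dm l (ode_op ls f)"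

definition Espace :: "complex list \<Rightarrow> (real \<Rightarrow> complex) set" where
  "Espace ls = {f. smooth f \<and> (\<forall>x. ode_op ls f x = 0)}"

definition zero_order :: "(real \<Rightarrow> complex) \<Rightarrow> real \<Rightarrow> nat \<Rightarrow> bool" where
  "zero_order f a k \<longleftrightarrow> (\<forall>j<k. dn j f a = 0) \<and> dn k f a \<noteq> 0"

definition ext_cheb :: "complex list \<Rightarrow> real set \<Rightarrow> bool" where
  "ext_cheb ls A \<longleftrightarrow> (\<forall>f \<in> Espace ls. f \<noteq> (\<lambda>_. 0) \<longrightarrow>
     (\<forall>S (k :: real \<Rightarrow> nat). finite S \<and> S \<subseteq> A \<and> (\<forall>x\<in>S. \<forall>j<k x. dn j f x = 0)
        \<longrightarrow> (\<Sum>x\<in>S. k x) \<le> length ls - 1))"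

definition bern :: "complex list \<Rightarrow> real \<Rightarrow> real \<Rightarrow> nat \<Rightarrow> real \<Rightarrow> complex" where
  "bern ls a b k = (THE p. p \<in> Espace ls \<and> zero_order p a k
      \<and> zero_order p b (length ls - 1 - k) \<and> dn k p a = 1)"

end

theory Submission
  imports Defs "Jordan_Normal_Form.Determinant"
begin


lemma dn_dn: "dn k (dn j f) = dn (k + j) f"
  by (induction k) auto

lemma dn_1: "dn 1 f x = vector_derivative f (at x)"
  by simp

lemma smooth_dn: "smooth f \<Longrightarrow> smooth (dn j f)"
  unfolding smooth_def by (simp add: dn_dn)

lemma smooth_D: "smooth f \<Longrightarrow> (dn k f has_vector_derivative dn (Suc k) f x) (at x)"
  unfolding smooth_def by blast

lemma smooth_D': "smooth f \<Longrightarrow> (dn k f has_vector_derivative vector_derivative (dn k f) (at x)) (at x)"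
  using smooth_D[of f k x] by simp

lemma smooth_D0: "smooth f \<Longrightarrow> (f has_vector_derivative dn 1 f x) (at x)"
  using smooth_D[of f 0] by simp

lemma smooth_cont: "smooth f \<Longrightarrow> continuous (at x) f"
  using smooth_D0 has_vector_derivative_continuous by blast

lemma smooth_char:
  assumes "\<And>k x. (D k has_vector_derivative D (Suc k) x) (at x)" and "D 0 = f"
  shows "smooth f \<and> (\<forall>k. dn k f = D k)"
proof -
  have eq: "dn k f = D k" for k
  proof (induction k)
    case 0 then show ?case using assms(2) by simp
  next
    case (Suc k)
    show ?case using assms(1) by (auto simp: Suc vector_derivative_at)
  qed
  show ?thesis using assms(1) unfolding smooth_def eq by auto
qed

lemma smooth_add:
  assumes "smooth f" "smooth g"
  shows "smooth (\<lambda>x. f x + g x) \<and> (\<forall>k. dn k (\<lambda>x. f x + g x) = (\<lambda>x. dn k f x + dn k g x))"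
  by (rule smooth_char) (auto intro!: has_vector_derivative_add smooth_D smooth_D' assms)

lemma smooth_diff:
  assumes "smooth f" "smooth g"
  shows "smooth (\<lambda>x. f x - g x) \<and> (\<forall>k. dn k (\<lambda>x. f x - g x) = (\<lambda>x. dn k f x - dn k g x))"
  by (rule smooth_char) (auto intro!: has_vector_derivative_diff smooth_D smooth_D' assms)

lemma smooth_cmult:
  assumes "smooth f"
  shows "smooth (\<lambda>x. c * f x) \<and> (\<forall>k. dn k (\<lambda>x. c * f x) = (\<lambda>x. c * dn k f x))"
  by (rule smooth_char) (auto intro!: has_vector_derivative_mult_right smooth_D smooth_D' assms)

lemma smooth_sum:
  assumes "finite I" "\<And>i. i \<in> I \<Longrightarrow> smooth (f i)"
  shows "smooth (\<lambda>x. \<Sum>i\<in>I. c i * f i x) \<and> (\<forall>k. dn k (\<lambda>x. \<Sum>i\<in>I. c i * f i x) = (\<lambda>x. \<Sum>i\<in>I. c i * dn k (f i) x))"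
  by (rule smooth_char) (auto intro!: has_vector_derivative_sum has_vector_derivative_mult_right smooth_D smooth_D' assms)

lemma smooth_zero: "smooth (\<lambda>x. 0) \<and> (\<forall>k. dn k (\<lambda>x. 0) = (\<lambda>x. 0))"
  by (rule smooth_char) auto

lemma Dm_dn: "Dm l f = (\<lambda>x. dn 1 f x - l * f x)"
  unfolding Dm_def by simp

lemma smooth_Dm: "smooth f \<Longrightarrow> smooth (Dm l f)"
  unfolding Dm_dn using smooth_diff smooth_dn smooth_cmult by blast

lemma Dm_add: "smooth f \<Longrightarrow> smooth g \<Longrightarrow> Dm l (\<lambda>x. f x + g x) = (\<lambda>x. Dm l f x + Dm l g x)"
  unfolding Dm_dn using smooth_add[of f g] by (auto simp: algebra_simps)

lemma Dm_diff: "smooth f \<Longrightarrow> smooth g \<Longrightarrow> Dm l (\<lambda>x. f x - g x) = (\<lambda>x. Dm l f x - Dm l g x)"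
  unfolding Dm_dn using smooth_diff[of f g] by (auto simp: algebra_simps)

lemma Dm_cmult: "smooth f \<Longrightarrow> Dm l (\<lambda>x. c * f x) = (\<lambda>x. c * Dm l f x)"
  unfolding Dm_dn using smooth_cmult[of f c] by (auto simp: algebra_simps)

lemma Dm_zero: "Dm l (\<lambda>x. 0) = (\<lambda>x. 0)"
  unfolding Dm_dn using smooth_zero by auto

lemma smooth_ode_op: "smooth f \<Longrightarrow> smooth (ode_op ls f)"
  by (induction ls) (auto intro: smooth_Dm)

lemma ode_op_add: "smooth f \<Longrightarrow> smooth g \<Longrightarrow> ode_op ls (\<lambda>x. f x + g x) = (\<lambda>x. ode_op ls f x + ode_op ls g x)"
  by (induction ls) (auto simp: Dm_add smooth_ode_op)

lemma ode_op_diff: "smooth f \<Longrightarrow> smooth g \<Longrightarrow> ode_op ls (\<lambda>x. f x - g x) = (\<lambda>x. ode_op ls f x - ode_op ls g x)"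
  by (induction ls) (auto simp: Dm_diff smooth_ode_op)

lemma ode_op_cmult: "smooth f \<Longrightarrow> ode_op ls (\<lambda>x. c * f x) = (\<lambda>x. c * ode_op ls f x)"
  by (induction ls) (auto simp: Dm_cmult smooth_ode_op)

lemma ode_op_zero: "ode_op ls (\<lambda>x. 0) = (\<lambda>x. 0)"
  by (induction ls) (auto simp: Dm_zero)

lemma ode_op_append: "ode_op (ls @ [l]) f = ode_op ls (Dm l f)"
  by (induction ls) auto

lemma Espace_add: "f \<in> Espace ls \<Longrightarrow> g \<in> Espace ls \<Longrightarrow> (\<lambda>x. f x + g x) \<in> Espace ls"
  unfolding Espace_def using smooth_add ode_op_add by auto

lemma Espace_diff: "f \<in> Espace ls \<Longrightarrow> g \<in> Espace ls \<Longrightarrow> (\<lambda>x. f x - g x) \<in> Espace ls"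
  unfolding Espace_def using smooth_diff ode_op_diff by auto

lemma Espace_cmult: "f \<in> Espace ls \<Longrightarrow> (\<lambda>x. c * f x) \<in> Espace ls"
  unfolding Espace_def using smooth_cmult ode_op_cmult by auto

lemma Espace_zero: "(\<lambda>x. 0) \<in> Espace ls"
  unfolding Espace_def using smooth_zero ode_op_zero by auto

lemma Espace_sum:
  assumes "finite I" "\<And>i. i \<in> I \<Longrightarrow> f i \<in> Espace ls"
  shows "(\<lambda>x. \<Sum>i\<in>I. c i * f i x) \<in> Espace ls"
  using assms
proof (induction I rule: finite_induct)
  case empty then show ?case using Espace_zero by simp
next
  case (insert i I)
  have "(\<lambda>x. c i * f i x + (\<Sum>i\<in>I. c i * f i x)) \<in> Espace ls"
    by (rule Espace_add) (use insert Espace_cmult in auto)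
  then show ?case using insert by simp
qed

lemma cheb_zero:
  assumes "ext_cheb L {a, b}" "a \<noteq> b" "f \<in> Espace L"
    "\<forall>j<p. dn j f a = 0" "\<forall>j<q. dn j f b = 0" "p + q > length L - 1"
  shows "f = (\<lambda>_. 0)"
proof (rule ccontr)
  assume "f \<noteq> (\<lambda>_. 0)"
  define k where "k = (\<lambda>x. if x = a then p else q)"
  have "(\<Sum>x\<in>{a,b}. k x) \<le> length L - 1"
    using assms(1,3) \<open>f \<noteq> _\<close> unfolding ext_cheb_def
    apply (elim ballE allE[of _ "{a,b}"] allE[of _ k])
    using assms(4,5) by (auto simp: k_def)
  then show False using assms(2,6) by (simp add: k_def)
qed




lemma exp_deriv:
  "((\<lambda>x. exp (complex_of_real (x - a) * l)) has_vector_derivative (l * exp (complex_of_real (x - a) * l))) (at x)"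
proof -
  have d1: "((\<lambda>x. complex_of_real (x - a)) has_vector_derivative 1) (at x)"
    by (auto intro!: derivative_eq_intros simp: has_vector_derivative_def fun_eq_iff of_real_def)
  have d2: "((\<lambda>z. exp (z * l)) has_field_derivative (exp (complex_of_real (x - a) * l) * l)) (at (complex_of_real (x - a)))"
    by (auto intro!: derivative_eq_intros)
  from field_vector_diff_chain_at[OF d1 d2] show ?thesis by (simp add: o_def mult.commute)
qed

lemma exp_smooth:
  "smooth (\<lambda>x. exp (complex_of_real (x - a) * l)) \<and> (\<forall>k. dn k (\<lambda>x. exp (complex_of_real (x - a) * l)) = (\<lambda>x. l ^ k * exp (complex_of_real (x - a) * l)))"
proof (rule smooth_char)
  fix k x
  show "((\<lambda>x. l ^ k * exp (complex_of_real (x - a) * l)) has_vector_derivative l ^ Suc k * exp (complex_of_real (x - a) * l)) (at x)"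
    using has_vector_derivative_mult_right[OF exp_deriv[of a l x], of "l^k"] by (simp add: algebra_simps)
qed simp

lemma exp_Espace: "(\<lambda>x. exp (complex_of_real (x - a) * l)) \<in> Espace (ls @ [l])"
proof -
  have "Dm l (\<lambda>x. exp (complex_of_real (x - a) * l)) = (\<lambda>x. 0)"
    unfolding Dm_dn using exp_smooth[of a l] by auto
  then show ?thesis unfolding Espace_def using exp_smooth[of a l]
    by (simp add: ode_op_append ode_op_zero)
qed

lemma antideriv:
  fixes f :: "real \<Rightarrow> complex"
  assumes cont: "\<And>x. continuous (at x) f"
  shows "\<exists>G. G a = 0 \<and> (\<forall>x. (G has_vector_derivative f x) (at x))"
proof -
  have co: "continuous_on S f" for S using cont by (simp add: continuous_at_imp_continuous_on)
  have int: "f integrable_on {u..v}" for u v by (rule integrable_continuous_real[OF co])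
  define G where "G x = integral {a..x} f - integral {x..a} f" for x
  have "(G has_vector_derivative f x0) (at x0)" for x0
  proof -
    define c where "c = min a x0 - 1"
    have eq: "integral {c..y} f - integral {c..a} f = G y" if "y \<in> {c<..}" for y
    proof (cases "a \<le> y")
      case True
      have "integral {x..a} f = 0" if "a \<le> x" for x
        using that by (cases "x = a") auto
      moreover have "integral {c..a} f + integral {a..y} f = integral {c..y} f"
        using Henstock_Kurzweil_Integration.integral_combine[OF _ True int, of c] c_def by simp
      ultimately show ?thesis unfolding G_def using True by (simp add: algebra_simps)
    next
      case False
      have "integral {c..y} f + integral {y..a} f = integral {c..a} f"
        using Henstock_Kurzweil_Integration.integral_combine[OF _ _ int, of c y a] False c_def that by simp
      then show ?thesis unfolding G_def using False by (simp add: algebra_simps)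
    qed
    have i: "x0 \<in> interior {c..x0+1}" using c_def by auto
    have "((\<lambda>u. integral {c..u} f) has_vector_derivative f x0) (at x0 within {c..x0+1})"
      by (rule integral_has_vector_derivative) (use co c_def in auto)
    then have "((\<lambda>u. integral {c..u} f) has_vector_derivative f x0) (at x0)"
      unfolding at_within_interior[OF i] .
    from has_vector_derivative_diff[OF this has_vector_derivative_const[of "integral {c..a} f"]]
    have "((\<lambda>u. integral {c..u} f - integral {c..a} f) has_vector_derivative f x0) (at x0)"
      by simp
    then show ?thesis
      by (rule has_vector_derivative_transform_within_open[where S="{c<..}"])
         (use eq c_def in auto)
  qed
  moreover have "G a = 0" unfolding G_def by simp
  ultimately show ?thesis by blast
qed

lemma solve_Dm:
  assumes "smooth f"
  shows "\<exists>g. smooth g \<and> g a = 0 \<and> Dm l g = f"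
proof -
  define E where "E x = exp (complex_of_real (x - a) * l)" for x
  define Ei where "Ei x = exp (complex_of_real (x - a) * (-l))" for x
  have cE: "continuous (at x) (\<lambda>x. Ei x * f x)" for x
    unfolding Ei_def
    using has_vector_derivative_continuous[OF exp_deriv] smooth_cont[OF assms]
    by (intro continuous_mult) auto
  obtain G where G: "G a = 0" "\<And>x. (G has_vector_derivative Ei x * f x) (at x)"
    using antideriv[OF cE] by blast
  define g where "g x = E x * G x" for x
  have EEi: "E x * Ei x = 1" for x
    unfolding E_def Ei_def by (simp add: exp_add[symmetric])
  have gd: "(g has_vector_derivative l * g x + f x) (at x)" for x
  proof -
    have "(g has_vector_derivative E x * (Ei x * f x) + l * E x * G x) (at x)"
      unfolding g_def E_def using has_vector_derivative_mult[OF exp_deriv G(2)]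
      by (simp add: E_def)
    moreover have "E x * (Ei x * f x) + l * E x * G x = l * g x + f x"
      unfolding g_def using EEi[of x] by (simp add: algebra_simps)
    ultimately show ?thesis by simp
  qed
  define D where "D = rec_nat g (\<lambda>k Dk. (\<lambda>x. l * Dk x + dn k f x))"
  have D0: "D 0 = g" and DS: "D (Suc k) = (\<lambda>x. l * D k x + dn k f x)" for k
    unfolding D_def by simp_all
  have Dd: "(D k has_vector_derivative D (Suc k) x) (at x)" for k x
  proof (induction k arbitrary: x)
    case 0 then show ?case using gd by (simp add: D0 DS)
  next
    case (Suc k)
    have e: "D (Suc k) = (\<lambda>x. l * D k x + dn k f x)" by (rule DS)
    have "((\<lambda>x. l * D k x + dn k f x) has_vector_derivative l * D (Suc k) x + dn (Suc k) f x) (at x)"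
      by (intro has_vector_derivative_add has_vector_derivative_mult_right Suc smooth_D assms)
    moreover have "D (Suc (Suc k)) x = l * D (Suc k) x + dn (Suc k) f x" by (simp only: DS)
    ultimately show ?case using e by simp
  qed
  from smooth_char[OF Dd D0] have sg: "smooth g" and dg: "\<And>k. dn k g = D k" by auto
  have "Dm l g = f" unfolding Dm_dn dg using DS[of 0] D0 by simp
  moreover have "g a = 0" unfolding g_def using G by simp
  ultimately show ?thesis using sg by blast
qed




lemma solve_square:
  fixes M :: "nat \<Rightarrow> nat \<Rightarrow> complex" and N :: nat and y :: "nat \<Rightarrow> complex"
  assumes inj: "\<And>c. (\<forall>r<N. (\<Sum>i<N. M r i * c i) = 0) \<Longrightarrow> (\<forall>i<N. c i = 0)"
  shows "\<exists>c. \<forall>r<N. (\<Sum>i<N. M r i * c i) = y r"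
proof -
  define A where "A = mat N N (\<lambda>(r,i). M r i)"
  have A: "A \<in> carrier_mat N N" unfolding A_def by auto
  have mv: "\<And>v r. v \<in> carrier_vec N \<Longrightarrow> r < N \<Longrightarrow> (A *\<^sub>v v) $ r = (\<Sum>i<N. M r i * v $ i)"
    unfolding A_def by (auto simp: scalar_prod_def row_def intro!: sum.cong simp: lessThan_atLeast0 mult.commute)
  have "det A \<noteq> 0"
  proof
    assume "det A = 0"
    then obtain v where v: "v \<in> carrier_vec N" "v \<noteq> 0\<^sub>v N" "A *\<^sub>v v = 0\<^sub>v N"
      using det_0_iff_vec_prod_zero[OF A] by auto
    have "\<forall>r<N. (\<Sum>i<N. M r i * v $ i) = 0"
      using v mv by (metis index_zero_vec(1))
    then have "\<forall>i<N. v $ i = 0" using inj by blast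
    then have "v = 0\<^sub>v N" using v(1) by (auto intro!: eq_vecI)
    with v(2) show False by simp
  qed
  from det_non_zero_imp_unit[OF A this, of "()"] obtain B where
    B: "B \<in> carrier_mat N N" "A * B = 1\<^sub>m N"
    unfolding Units_def ring_mat_def by auto
  define w where "w = B *\<^sub>v vec N y"
  have w: "w \<in> carrier_vec N" unfolding w_def using B by auto
  have "A *\<^sub>v w = vec N y" unfolding w_def
    using B A by (metis assoc_mult_mat_vec one_mult_mat_vec vec_carrier)
  then have "\<forall>r<N. (\<Sum>i<N. M r i * w $ i) = y r"
    using mv[OF w] by (metis index_vec)
  then show ?thesis by blast
qed



lemma Espace_smooth: "f \<in> Espace L \<Longrightarrow> smooth f"
  unfolding Espace_def by auto

lemma tri_indep:
  assumes B: "\<And>i. i < N \<Longrightarrow> smooth (B i)"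
    "\<And>i j. i < N \<Longrightarrow> j < i \<Longrightarrow> dn j (B i) a = 0"
    "\<And>i. i < N \<Longrightarrow> dn i (B i) a = 1"
    and z: "\<And>j. j < N \<Longrightarrow> dn j (\<lambda>x. \<Sum>i<N. c i * B i x) a = 0"
  shows "\<forall>i<N. c i = 0"
proof -
  have dsum: "dn j (\<lambda>x. \<Sum>i<N. c i * B i x) a = (\<Sum>i<N. c i * dn j (B i) a)" for j
    using smooth_sum[of "{..<N}" B c] B(1) by auto
  have "c i = 0" if "i < N" for i
    using that
  proof (induction i rule: less_induct)
    case (less i)
    have "(\<Sum>i'<N. c i' * dn i (B i') a) = (\<Sum>i'<N. if i' = i then c i else 0)"
    proof (rule sum.cong)
      fix i' assume "i' \<in> {..<N}"
      then show "c i' * dn i (B i') a = (if i' = i then c i else 0)"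
        using less B(2)[of i' i] B(3)[of i] by (cases i' i rule: linorder_cases) auto
    qed simp
    also have "\<dots> = c i" using less.prems by simp
    finally show ?case using z[OF less.prems] dsum[of i] by simp
  qed
  then show ?thesis by blast
qed

lemma hsys:
  "\<exists>h. \<forall>i<length L. h i \<in> Espace L \<and> (\<forall>j<i. dn j (h i) a = 0) \<and> dn i (h i) a = 1"
proof (induction L rule: rev_induct)
  case Nil then show ?case by simp
next
  case (snoc l L)
  then obtain h where h: "\<And>i. i < length L \<Longrightarrow> h i \<in> Espace L \<and> (\<forall>j<i. dn j (h i) a = 0) \<and> dn i (h i) a = 1"
    by blast
  have "\<forall>i. \<exists>g. i < length L \<longrightarrow> smooth g \<and> g a = 0 \<and> Dm l g = h i"
    using solve_Dm h Espace_smooth by blast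
  then obtain G where G: "\<And>i. i < length L \<Longrightarrow> smooth (G i) \<and> G i a = 0 \<and> Dm l (G i) = h i"
    by metis
  define H where "H i = (if i = 0 then (\<lambda>x. exp (complex_of_real (x - a) * l)) else G (i - 1))" for i
  have "H i \<in> Espace (L @ [l]) \<and> (\<forall>j<i. dn j (H i) a = 0) \<and> dn i (H i) a = 1"
    if "i < length (L @ [l])" for i
  proof (cases i)
    case 0
    then show ?thesis using exp_Espace[of a l L] exp_smooth[of a l] by (simp add: H_def)
  next
    case (Suc i')
    then have i': "i' < length L" using that by simp
    have g: "smooth (G i')" "G i' a = 0" "Dm l (G i') = h i'" using G[OF i'] by auto
    have hs: "smooth (h i')" using h[OF i'] Espace_smooth by blast
    have "dn 1 (G i') = (\<lambda>x. l * G i' x + h i' x)"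
      using fun_cong[OF g(3)] unfolding Dm_dn by (auto simp: fun_eq_iff algebra_simps)
    then have rec: "dn (Suc j) (G i') = (\<lambda>x. l * dn j (G i') x + dn j (h i') x)" for j
      using dn_dn[of j 1 "G i'"] smooth_add[OF smooth_cmult[OF g(1), THEN conjunct1] hs]
        smooth_cmult[OF g(1), of l] by simp
    have z: "\<forall>j\<le>i'. dn j (G i') a = 0"
    proof (intro allI impI)
      fix j assume "j \<le> i'"
      then show "dn j (G i') a = 0"
      proof (induction j)
        case 0 then show ?case using g(2) by simp
      next
        case (Suc j)
        then show ?case using rec[of j] h[OF i'] by simp
      qed
    qed
    have one: "dn (Suc i') (G i') a = 1" using rec[of i'] z h[OF i'] by simp
    have E: "G i' \<in> Espace (L @ [l])"
      using g h[OF i'] unfolding Espace_def by (simp add: ode_op_append)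
    show ?thesis using Suc E z one by (auto simp: H_def less_Suc_eq_le)
  qed
  then show ?case by blast
qed

lemma bern_exists:
  assumes cheb: "ext_cheb L {a, b}" and ab: "a \<noteq> b" and k: "k < length L"
  shows "\<exists>p. p \<in> Espace L \<and> (\<forall>j<k. dn j p a = 0) \<and> dn k p a = 1 \<and> (\<forall>j<length L - 1 - k. dn j p b = 0)"
proof -
  define N where "N = length L"
  obtain h where h: "\<And>i. i < N \<Longrightarrow> h i \<in> Espace L \<and> (\<forall>j<i. dn j (h i) a = 0) \<and> dn i (h i) a = 1"
    using hsys[of L a] unfolding N_def by blast
  have hs: "\<And>i. i < N \<Longrightarrow> smooth (h i)" using h Espace_smooth by blast
  define M where "M r i = (if r \<le> k then dn r (h i) a else dn (r - k - 1) (h i) b)" for r i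
  have dsum: "dn j (\<lambda>x. \<Sum>i<N. c i * h i x) = (\<lambda>x. \<Sum>i<N. c i * dn j (h i) x)" for j c
    using smooth_sum[of "{..<N}" h c] hs by auto
  have Msum: "(\<Sum>i<N. M r i * c i) = (if r \<le> k then dn r (\<lambda>x. \<Sum>i<N. c i * h i x) a
      else dn (r - k - 1) (\<lambda>x. \<Sum>i<N. c i * h i x) b)" for r c
    unfolding dsum M_def by (auto simp: mult.commute)
  have inS: "(\<lambda>x. \<Sum>i<N. c i * h i x) \<in> Espace L" for c
    by (rule Espace_sum) (use h in auto)
  have "\<exists>c. \<forall>r<N. (\<Sum>i<N. M r i * c i) = (if r = k then 1 else 0)"
  proof (rule solve_square)
    fix c assume hc: "\<forall>r<N. (\<Sum>i<N. M r i * c i) = 0"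
    let ?p = "\<lambda>x. \<Sum>i<N. c i * h i x"
    have za: "\<forall>j<k+1. dn j ?p a = 0"
    proof (intro allI impI)
      fix j
      assume j: "j < k + 1"
      then have "j < N" using k N_def by simp
      then have "(\<Sum>i<N. M j i * c i) = 0" using hc by blast
      then show "dn j ?p a = 0" using Msum[of j c] j by simp
    qed
    have zb: "\<forall>j<N - 1 - k. dn j ?p b = 0"
    proof (intro allI impI)
      fix j
      assume j: "j < N - 1 - k"
      then have "j + k + 1 < N" by simp
      then have "(\<Sum>i<N. M (j + k + 1) i * c i) = 0" using hc by blast
      then show "dn j ?p b = 0" using Msum[of "j + k + 1" c] by simp
    qed
    have "?p = (\<lambda>_. 0)"
      by (rule cheb_zero[OF cheb ab inS za zb]) (use k N_def in auto)
    then have "\<forall>j<N. dn j ?p a = 0" using smooth_zero by simp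
    then show "\<forall>i<N. c i = 0"
      proof (intro tri_indep[of N h a])
      fix i j assume "i < N" "j < i" then show "dn j (h i) a = 0" using h by blast
    qed (use h hs in blast)+
  qed
  then obtain c where c: "\<forall>r<N. (\<Sum>i<N. M r i * c i) = (if r = k then 1 else 0)" by blast
  let ?p = "\<lambda>x. \<Sum>i<N. c i * h i x"
  have "\<forall>j<k. dn j ?p a = 0"
  proof (intro allI impI)
    fix j assume j: "j < k"
    then have "j < N" using k N_def by simp
    then have "(\<Sum>i<N. M j i * c i) = 0" using c j by simp
    then show "dn j ?p a = 0" using Msum[of j c] j by simp
  qed
  moreover have "dn k ?p a = 1"
  proof -
    have "(\<Sum>i<N. M k i * c i) = 1" using c k N_def by simp
    then show ?thesis using Msum[of k c] by simp
  qed
  moreover have "\<forall>j<length L - 1 - k. dn j ?p b = 0"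
  proof (intro allI impI)
    fix j
    assume j: "j < length L - 1 - k"
    then have "j + k + 1 < N" using N_def by simp
    then have "(\<Sum>i<N. M (j + k + 1) i * c i) = 0" using c by simp
    then show "dn j ?p b = 0" using Msum[of "j + k + 1" c] by simp
  qed
  ultimately show ?thesis using inS by blast
qed




lemma step_part:
  fixes q :: "complex \<Rightarrow> real"
  assumes qdiv: "\<And>z t. q (z / complex_of_real t) = q z / t"
    and qder: "\<And>f D x. (f has_vector_derivative D) (at x) \<Longrightarrow> ((\<lambda>x. q (f x)) has_field_derivative q D) (at x)"
    and qlim: "\<And>(f::real \<Rightarrow> complex) l F. (f \<longlongrightarrow> l) F \<Longrightarrow> ((\<lambda>x. q (f x)) \<longlongrightarrow> q l) F"
    and q0: "q 0 = 0"
    and h: "smooth h" "h b = 0"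
    and IH: "((\<lambda>x. dn 1 h x / complex_of_real ((x - b) ^ r)) \<longlongrightarrow> L) (at b)"
  shows "((\<lambda>x. q (h x) / (x - b) ^ Suc r) \<longlongrightarrow> q L / real (Suc r)) (at b)"
proof (rule lhopital[where f' = "\<lambda>x. q (dn 1 h x)" and g' = "\<lambda>x. real (Suc r) * (x - b) ^ r"])
  have "(h \<longlongrightarrow> h b) (at b)" using smooth_cont[OF h(1)] by (simp add: isCont_def)
  from qlim[OF this] show "((\<lambda>x. q (h x)) \<longlongrightarrow> 0) (at b)" using h(2) q0 by simp
  show "((\<lambda>x. (x - b) ^ Suc r) \<longlongrightarrow> 0) (at b)"
    by (rule tendsto_eq_intros refl)+ simp
  show "\<forall>\<^sub>F x in at b. (x - b) ^ Suc r \<noteq> 0"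
    unfolding eventually_at_filter by (auto intro: always_eventually)
  show "\<forall>\<^sub>F x in at b. real (Suc r) * (x - b) ^ r \<noteq> 0"
    unfolding eventually_at_filter by (auto intro: always_eventually)
  show "\<forall>\<^sub>F x in at b. ((\<lambda>x. q (h x)) has_real_derivative q (dn 1 h x)) (at x)"
    by (intro always_eventually allI qder smooth_D0 h)
  show "\<forall>\<^sub>F x in at b. ((\<lambda>x. (x - b) ^ Suc r) has_real_derivative real (Suc r) * (x - b) ^ r) (at x)"
    by (intro always_eventually allI) (auto intro!: derivative_eq_intros; cases r; simp add: field_simps)
  have "((\<lambda>x. q (dn 1 h x / complex_of_real ((x - b) ^ r)) / real (Suc r)) \<longlongrightarrow> q L / real (Suc r)) (at b)"
    by (intro tendsto_divide qlim IH tendsto_const) simp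
  moreover have "(\<lambda>x. q (dn 1 h x / complex_of_real ((x - b) ^ r)) / real (Suc r)) = (\<lambda>x. q (dn 1 h x) / (real (Suc r) * (x - b) ^ r))"
    by (rule ext) (simp only: qdiv divide_divide_eq_left mult.commute)
  ultimately show "((\<lambda>x. q (dn 1 h x) / (real (Suc r) * (x - b) ^ r)) \<longlongrightarrow> q L / real (Suc r)) (at b)"
    by simp
qed

lemma ratio_lim:
  assumes "smooth h" "\<forall>j<r. dn j h b = 0"
  shows "((\<lambda>x. h x / complex_of_real ((x - b) ^ r)) \<longlongrightarrow> dn r h b / complex_of_real (fact r)) (at b)"
  using assms
proof (induction r arbitrary: h)
  case 0
  then show ?case using smooth_cont[OF 0(1)] by (simp add: isCont_def)
next
  case (Suc r)
  define h1 where "h1 = dn 1 h"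
  have s1: "smooth h1" unfolding h1_def by (rule smooth_dn[OF Suc.prems(1)])
  have dh1: "dn j h1 = dn (Suc j) h" for j unfolding h1_def dn_dn Suc_eq_plus1 ..
  have "((\<lambda>x. h1 x / complex_of_real ((x - b) ^ r)) \<longlongrightarrow> dn r h1 b / complex_of_real (fact r)) (at b)"
    by (rule Suc.IH[OF s1]) (use Suc.prems(2) dh1 in auto)
  then have IH: "((\<lambda>x. dn 1 h x / complex_of_real ((x - b) ^ r)) \<longlongrightarrow> dn (Suc r) h b / complex_of_real (fact r)) (at b)"
    unfolding dh1 unfolding h1_def .
  have hb: "h b = 0" using Suc.prems(2) by (metis dn.simps(1) zero_less_Suc)
  have R: "((\<lambda>x. Re (h x) / (x - b) ^ Suc r) \<longlongrightarrow> Re (dn (Suc r) h b / complex_of_real (fact r)) / real (Suc r)) (at b)"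
    by (rule step_part[OF _ _ _ _ Suc.prems(1) hb IH])
       (auto intro: has_field_derivative_Re tendsto_Re)
  have I: "((\<lambda>x. Im (h x) / (x - b) ^ Suc r) \<longlongrightarrow> Im (dn (Suc r) h b / complex_of_real (fact r)) / real (Suc r)) (at b)"
    by (rule step_part[OF _ _ _ _ Suc.prems(1) hb IH])
       (auto intro: has_field_derivative_Im tendsto_Im)
  have "((\<lambda>x. Complex (Re (h x) / (x - b) ^ Suc r) (Im (h x) / (x - b) ^ Suc r)) \<longlongrightarrow>
     Complex (Re (dn (Suc r) h b / complex_of_real (fact r)) / real (Suc r)) (Im (dn (Suc r) h b / complex_of_real (fact r)) / real (Suc r))) (at b)"
    by (rule tendsto_Complex[OF R I])
  moreover have "Complex (Re (h x) / (x - b) ^ Suc r) (Im (h x) / (x - b) ^ Suc r) = h x / complex_of_real ((x - b) ^ Suc r)" for x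
    by (simp add: complex_eq_iff)
  moreover have "Complex (Re (dn (Suc r) h b / complex_of_real (fact r)) / real (Suc r)) (Im (dn (Suc r) h b / complex_of_real (fact r)) / real (Suc r))
     = dn (Suc r) h b / complex_of_real (fact (Suc r))"
  proof -
    have gen: "Complex (Re (z / complex_of_real t) / s) (Im (z / complex_of_real t) / s) = z / complex_of_real (s * t)" for z t s
      by (simp only: complex_eq_iff Re_divide_of_real Im_divide_of_real complex.sel divide_divide_eq_left mult.commute)
    show ?thesis unfolding gen fact_Suc[of r] by simp
  qed
  ultimately show ?case by simp
qed




lemma bern_props:
  assumes cheb: "ext_cheb L {a, b}" and ab: "a \<noteq> b" and k: "k < length L"
  shows "bern L a b k \<in> Espace L \<and> (\<forall>j<k. dn j (bern L a b k) a = 0) \<and> dn k (bern L a b k) a = 1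
    \<and> (\<forall>j<length L - 1 - k. dn j (bern L a b k) b = 0) \<and> dn (length L - 1 - k) (bern L a b k) b \<noteq> 0"
proof -
  obtain p where p: "p \<in> Espace L" "\<forall>j<k. dn j p a = 0" "dn k p a = 1" "\<forall>j<length L - 1 - k. dn j p b = 0"
    using bern_exists[OF cheb ab k] by blast
  have nz: "dn (length L - 1 - k) p b \<noteq> 0"
  proof
    assume z: "dn (length L - 1 - k) p b = 0"
    have "\<forall>j<Suc (length L - 1 - k). dn j p b = 0" using p(4) z less_Suc_eq by auto
    from cheb_zero[OF cheb ab p(1) p(2) this] k have "p = (\<lambda>_. 0)" by simp
    then show False using p(3) smooth_zero by simp
  qed
  have P: "p \<in> Espace L \<and> zero_order p a k \<and> zero_order p b (length L - 1 - k) \<and> dn k p a = 1"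
    using p nz unfolding zero_order_def by auto
  have U: "q = p" if q: "q \<in> Espace L \<and> zero_order q a k \<and> zero_order q b (length L - 1 - k) \<and> dn k q a = 1" for q
  proof -
    define W where "W = (\<lambda>x. q x - p x)"
    have WE: "W \<in> Espace L" unfolding W_def using Espace_diff q p(1) by blast
    have dW: "dn j W = (\<lambda>x. dn j q x - dn j p x)" for j
      unfolding W_def using smooth_diff[of q p] q p(1) Espace_smooth by blast
    have "\<forall>j<Suc k. dn j W a = 0"
      using q p(2,3) unfolding dW zero_order_def by (auto simp: less_Suc_eq)
    moreover have "\<forall>j<length L - 1 - k. dn j W b = 0"
      using q p(4) unfolding dW zero_order_def by auto
    ultimately have "W = (\<lambda>_. 0)" using cheb_zero[OF cheb ab WE] k by simp
    then show ?thesis unfolding W_def by (auto simp: fun_eq_iff)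
  qed
  have "bern L a b k = p" unfolding bern_def
    using the_equality[of "\<lambda>q. q \<in> Espace L \<and> zero_order q a k \<and> zero_order q b (length L - 1 - k) \<and> dn k q a = 1" p] P U
    by blast
  then show ?thesis using p nz by simp
qed

lemma eq_by_cheb:
  assumes cheb: "ext_cheb L {a, b}" and ab: "a \<noteq> b" and f: "f \<in> Espace L" and g: "g \<in> Espace L"
    and "\<forall>j<p. dn j f a = dn j g a" "\<forall>j<q. dn j f b = dn j g b" "p + q > length L - 1"
  shows "f = g"
proof -
  define W where "W = (\<lambda>x. f x - g x)"
  have WE: "W \<in> Espace L" unfolding W_def using Espace_diff f g by blast
  have dW: "dn j W = (\<lambda>x. dn j f x - dn j g x)" for j
    unfolding W_def using smooth_diff[of f g] f g Espace_smooth by blast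
  have "W = (\<lambda>_. 0)" by (rule cheb_zero[OF cheb ab WE]) (use assms(5-7) dW in auto)
  then show ?thesis unfolding W_def by (auto simp: fun_eq_iff)
qed

lemma dn_Dm: "smooth f \<Longrightarrow> dn j (Dm l f) = (\<lambda>x. dn (Suc j) f x - l * dn j f x)"
proof -
  assume s: "smooth f"
  have "dn j (Dm l f) = (\<lambda>x. dn j (dn 1 f) x - dn j (\<lambda>x. l * f x) x)"
    unfolding Dm_dn using smooth_diff[OF smooth_dn[OF s] smooth_cmult[OF s, THEN conjunct1]] by blast
  also have "\<dots> = (\<lambda>x. dn (Suc j) f x - l * dn j f x)"
  proof -
    have e: "dn j (dn 1 f) = dn (Suc j) f" by (simp only: dn_dn Suc_eq_plus1)
    show ?thesis unfolding e using smooth_cmult[OF s, of l] by simp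
  qed
  finally show ?thesis .
qed

lemma Dm_sum:
  fixes c :: "'a \<Rightarrow> complex"
  assumes "finite I" "\<And>i. i \<in> I \<Longrightarrow> smooth (f i)"
  shows "Dm l (\<lambda>x. \<Sum>i\<in>I. c i * f i x) = (\<lambda>x. \<Sum>i\<in>I. c i * Dm l (f i) x)"
proof -
  have h: "dn 1 (\<lambda>x. \<Sum>i\<in>I. c i * f i x) = (\<lambda>x. \<Sum>i\<in>I. c i * dn 1 (f i) x)"
    using smooth_sum[of I f c] assms by blast
  show ?thesis unfolding Dm_dn h by (auto simp: fun_eq_iff algebra_simps sum_subtractf sum_distrib_left)
qed

lemma ratio_zero:
  assumes f: "smooth f" "\<forall>j\<le>r. dn j f b = 0" and g: "smooth g" "\<forall>j<r. dn j g b = 0" "dn r g b \<noteq> 0"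
  shows "((\<lambda>x. f x / g x) \<longlongrightarrow> 0) (at b) \<and> eventually (\<lambda>x. g x \<noteq> 0) (at b)"
proof -
  have F: "((\<lambda>x. f x / complex_of_real ((x - b) ^ r)) \<longlongrightarrow> 0) (at b)"
    using ratio_lim[OF f(1), of r b] f(2) by simp
  have G: "((\<lambda>x. g x / complex_of_real ((x - b) ^ r)) \<longlongrightarrow> dn r g b / complex_of_real (fact r)) (at b)"
    using ratio_lim[OF g(1) g(2)] .
  have nz: "dn r g b / complex_of_real (fact r) \<noteq> 0" using g(3) by simp
  have ev: "eventually (\<lambda>x. g x / complex_of_real ((x - b) ^ r) \<noteq> 0) (at b)"
    using tendsto_imp_eventually_ne[OF G nz] .
  then have ev2: "eventually (\<lambda>x. g x \<noteq> 0) (at b)" by (rule eventually_mono) auto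
  have "((\<lambda>x. (f x / complex_of_real ((x - b) ^ r)) / (g x / complex_of_real ((x - b) ^ r))) \<longlongrightarrow> 0 / (dn r g b / complex_of_real (fact r))) (at b)"
    by (rule tendsto_divide[OF F G nz])
  moreover have "eventually (\<lambda>x. (f x / complex_of_real ((x - b) ^ r)) / (g x / complex_of_real ((x - b) ^ r)) = f x / g x) (at b)"
    unfolding eventually_at_filter by (auto intro: always_eventually)
  ultimately have "((\<lambda>x. f x / g x) \<longlongrightarrow> 0) (at b)"
    using Lim_transform_eventually by fastforce
  then show ?thesis using ev2 by blast
qed




declare dn.simps(2)[simp del]

theorem mainTheorem10:
  fixes lam :: "nat \<Rightarrow> complex" and n :: nat and a b :: real
    and P Q :: "nat \<Rightarrow> real \<Rightarrow> complex" and d :: "nat \<Rightarrow> complex"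
  assumes "n \<ge> 1" and "a \<noteq> b"
    and "ext_cheb (map lam [0..<Suc n]) {a, b}"
    and "ext_cheb (map lam [0..<n]) {a, b}"
  defines "P \<equiv> bern (map lam [0..<Suc n]) a b"
    and "Q \<equiv> bern (map lam [0..<n]) a b"
    and "d \<equiv> (\<lambda>k. Lim (at b) (\<lambda>x. vector_derivative (P k) (at x) / Q k x))"
  shows "(\<forall>k<n. ((\<lambda>x. vector_derivative (P k) (at x) / Q k x) \<longlongrightarrow> d k) (at b) \<and> d k \<noteq> 0)
    \<and> (\<forall>x. exp (complex_of_real (x - a) * lam n)
            = P 0 x + (\<Sum>k=1..n. (-1) ^ k * (\<Prod>j<k. d j) * P k x))
    \<and> (\<forall>k\<in>{1..n-1}. (\<Prod>j<k. d j)
            = (-1) ^ n * (exp (complex_of_real (b - a) * lam n) / P n b) * (1 / (\<Prod>j=k..n-1. d j)))"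
proof -
  note n = assms(1) and ab = assms(2)
  define L' where "L' = map lam [0..<n]"
  define l where "l = lam n"
  have Leq: "map lam [0..<Suc n] = L' @ [l]" by (simp add: L'_def l_def)
  have lenL': "length L' = n" by (simp add: L'_def)
  have chL: "ext_cheb (L' @ [l]) {a, b}" using assms(3) Leq by simp
  have chL': "ext_cheb L' {a, b}" using assms(4) L'_def by simp
  have Pd: "P = bern (L' @ [l]) a b" unfolding P_def Leq ..
  have Qd: "Q = bern L' a b" unfolding Q_def L'_def ..
  have Pp: "P k \<in> Espace (L' @ [l]) \<and> (\<forall>j<k. dn j (P k) a = 0) \<and> dn k (P k) a = 1
      \<and> (\<forall>j<n - k. dn j (P k) b = 0) \<and> dn (n - k) (P k) b \<noteq> 0" if "k \<le> n" for k
    using bern_props[OF chL ab, of k] that lenL' unfolding Pd by simp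
  have Qp: "Q k \<in> Espace L' \<and> (\<forall>j<k. dn j (Q k) a = 0) \<and> dn k (Q k) a = 1
      \<and> (\<forall>j<n - 1 - k. dn j (Q k) b = 0) \<and> dn (n - 1 - k) (Q k) b \<noteq> 0" if "k < n" for k
    using bern_props[OF chL' ab, of k] that lenL' unfolding Qd by simp
  have Ps: "smooth (P k)" if "k \<le> n" for k using Pp[OF that] Espace_smooth by blast
  have Qs: "smooth (Q k)" if "k < n" for k using Qp[OF that] Espace_smooth by blast
  define R where "R k = Dm l (P k)" for k
  have RE: "R k \<in> Espace L'" if "k \<le> n" for k
    using Pp[OF that] smooth_Dm unfolding R_def Espace_def by (simp add: ode_op_append)
  have dR: "dn j (R k) x = dn (Suc j) (P k) x - l * dn j (P k) x" if "k \<le> n" for j k x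
    unfolding R_def using dn_Dm[OF Ps[OF that]] by simp
  define \<beta> where "\<beta> k = dn (n - 1 - k) (R k) b / dn (n - 1 - k) (Q k) b" for k
  define A where "A k = (if k = 0 then (\<lambda>x. 0) else Q (k - 1))" for k
  have dsc: "dn j (\<lambda>x. c * f x) = (\<lambda>x. c * dn j f x)" if "smooth f" for j c f
    using smooth_cmult[OF that] by blast
  have dsa: "dn j (\<lambda>x. f x + g x) = (\<lambda>x. dn j f x + dn j g x)" if "smooth f" "smooth g" for j f g
    using smooth_add[OF that] by blast
  have Rform: "R k = (\<lambda>x. A k x + (if k < n then \<beta> k * Q k x else 0))" if k: "k \<le> n" for k
  proof -
    consider "k = 0" | "0 < k" "k < n" | "k = n" using k n by linarith
    then show ?thesis
    proof cases
      case 1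
      have rhs: "(\<lambda>x. A k x + (if k < n then \<beta> k * Q k x else 0)) = (\<lambda>x. \<beta> 0 * Q 0 x)"
        using 1 n by (simp add: A_def)
      have n0: "0 < n" using n by simp
      note Q0 = Qp[OF n0] and P0 = Pp[of 0]
      have "R 0 = (\<lambda>x. \<beta> 0 * Q 0 x)"
      proof (rule eq_by_cheb[OF chL' ab RE[OF le0] Espace_cmult, where p=0 and q=n])
        show "Q 0 \<in> Espace L'" using Q0 by blast
        show "\<forall>j<0. dn j (R 0) a = dn j (\<lambda>x. \<beta> 0 * Q 0 x) a" by simp
        show "0 + n > length L' - 1" using lenL' n by simp
        show "\<forall>j<n. dn j (R 0) b = dn j (\<lambda>x. \<beta> 0 * Q 0 x) b"
        proof (intro allI impI)
          fix j assume j: "j < n"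
          have dQ: "dn j (\<lambda>x. \<beta> 0 * Q 0 x) b = \<beta> 0 * dn j (Q 0) b" using dsc[OF Qs[OF n0]] by simp
          show "dn j (R 0) b = dn j (\<lambda>x. \<beta> 0 * Q 0 x) b"
          proof (cases "j < n - 1")
            case True
            have "dn (Suc j) (P 0) b = 0" "dn j (P 0) b = 0" using P0 True by auto
            then have "dn j (R 0) b = 0" using dR[of 0 j b] by simp
            moreover have "dn j (Q 0) b = 0" using Q0 True by auto
            ultimately show ?thesis using dQ by simp
          next
            case False
            then have jj: "j = n - 1" using j by simp
            show ?thesis using dQ Q0 unfolding jj \<beta>_def by simp
          qed
        qed
      qed
      then show ?thesis using 1 rhs by simp
    next
      case 2
      have rhs: "(\<lambda>x. A k x + (if k < n then \<beta> k * Q k x else 0)) = (\<lambda>x. Q (k - 1) x + \<beta> k * Q k x)"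
        using 2 by (simp add: A_def)
      have k1: "k - 1 < n" using 2 by simp
      note Qa = Qp[OF k1] and Qb = Qp[OF 2(2)] and Pk = Pp[OF k]
      have sQa: "smooth (Q (k - 1))" and sQb: "smooth (Q k)" using Qs k1 2 by auto
      have dRHS: "dn j (\<lambda>x. Q (k - 1) x + \<beta> k * Q k x) x = dn j (Q (k - 1)) x + \<beta> k * dn j (Q k) x" for j x
        using dsa[OF sQa smooth_cmult[OF sQb, THEN conjunct1]] dsc[OF sQb] by simp
      have "R k = (\<lambda>x. Q (k - 1) x + \<beta> k * Q k x)"
      proof (rule eq_by_cheb[OF chL' ab RE[OF k] Espace_add[OF _ Espace_cmult], where p=k and q="n - k"])
        show "Q (k - 1) \<in> Espace L'" using Qa by blast
        show "Q k \<in> Espace L'" using Qb by blast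
        show "k + (n - k) > length L' - 1" using lenL' 2 by simp
        show "\<forall>j<k. dn j (R k) a = dn j (\<lambda>x. Q (k - 1) x + \<beta> k * Q k x) a"
        proof (intro allI impI)
          fix j assume j: "j < k"
          show "dn j (R k) a = dn j (\<lambda>x. Q (k - 1) x + \<beta> k * Q k x) a"
          proof (cases "j < k - 1")
            case True
            have "dn (Suc j) (P k) a = 0" "dn j (P k) a = 0" using Pk True by auto
            moreover have "dn j (Q (k - 1)) a = 0" "dn j (Q k) a = 0" using Qa Qb True j by auto
            ultimately show ?thesis using dR[OF k, of j a] dRHS[of j a] by simp
          next
            case False
            then have jj: "j = k - 1" using j by simp
            have "dn (Suc j) (P k) a = 1" "dn j (P k) a = 0" using Pk jj 2 by auto
            moreover have "dn j (Q (k - 1)) a = 1" "dn j (Q k) a = 0" using Qa Qb jj j by auto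
            ultimately show ?thesis using dR[OF k, of j a] dRHS[of j a] by simp
          qed
        qed
        show "\<forall>j<n - k. dn j (R k) b = dn j (\<lambda>x. Q (k - 1) x + \<beta> k * Q k x) b"
        proof (intro allI impI)
          fix j assume j: "j < n - k"
          have qa: "dn j (Q (k - 1)) b = 0" using Qa j 2 by auto
          show "dn j (R k) b = dn j (\<lambda>x. Q (k - 1) x + \<beta> k * Q k x) b"
          proof (cases "j < n - 1 - k")
            case True
            have "dn (Suc j) (P k) b = 0" "dn j (P k) b = 0" using Pk True by auto
            moreover have "dn j (Q k) b = 0" using Qb True by auto
            ultimately show ?thesis using dR[OF k, of j b] dRHS[of j b] qa by simp
          next
            case False
            then have jj: "j = n - 1 - k" using j by simp
            show ?thesis using dRHS[of j b] qa Qb unfolding jj \<beta>_def by simp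
          qed
        qed
      qed
      then show ?thesis using rhs by simp
    next
      case 3
      have rhs: "(\<lambda>x. A k x + (if k < n then \<beta> k * Q k x else 0)) = Q (n - 1)"
        using 3 n by (simp add: A_def)
      have k1: "n - 1 < n" using n by simp
      note Qa = Qp[OF k1] and Pk = Pp[of n]
      have "R n = Q (n - 1)"
      proof (rule eq_by_cheb[OF chL' ab RE[OF order_refl] _, where p=n and q=0])
        show "Q (n - 1) \<in> Espace L'" using Qa by blast
        show "\<forall>j<0. dn j (R n) b = dn j (Q (n - 1)) b" by simp
        show "n + 0 > length L' - 1" using lenL' n by simp
        show "\<forall>j<n. dn j (R n) a = dn j (Q (n - 1)) a"
        proof (intro allI impI)
          fix j assume j: "j < n"
          show "dn j (R n) a = dn j (Q (n - 1)) a"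
          proof (cases "j < n - 1")
            case True
            have "dn (Suc j) (P n) a = 0" "dn j (P n) a = 0" using Pk True by auto
            moreover have "dn j (Q (n - 1)) a = 0" using Qa True by auto
            ultimately show ?thesis using dR[of n j a] by simp
          next
            case False
            then have jj: "j = n - 1" using j by simp
            have "dn (Suc j) (P n) a = 1" "dn j (P n) a = 0" using Pk jj n by auto
            moreover have "dn j (Q (n - 1)) a = 1" using Qa jj by auto
            ultimately show ?thesis using dR[of n j a] by simp
          qed
        qed
      qed
      then show ?thesis using rhs 3 by simp
    qed
  qed
  define c where "c k = (-1) ^ k * (\<Prod>j<k. \<beta> j)" for k
  have crec: "c (Suc j) = - \<beta> j * c j" for j by (simp add: c_def)
  define G where "G = (\<lambda>x. \<Sum>k\<le>n. c k * P k x)"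
  have GE: "G \<in> Espace (L' @ [l])" unfolding G_def by (rule Espace_sum) (use Pp in auto)
  have DmG: "Dm l G = (\<lambda>x. \<Sum>k\<le>n. c k * R k x)" unfolding G_def R_def by (rule Dm_sum) (use Ps in auto)
  have sum0: "(\<Sum>k\<le>n. c k * R k x) = 0" for x
  proof -
    obtain m where m: "n = Suc m" using n by (cases n) auto
    have "(\<Sum>k\<le>n. c k * R k x) = (\<Sum>k\<le>n. c k * A k x + c k * (if k < n then \<beta> k * Q k x else 0))"
      by (rule sum.cong) (auto simp: Rform algebra_simps)
    also have "\<dots> = (\<Sum>k\<le>n. c k * A k x) + (\<Sum>k\<le>n. c k * (if k < n then \<beta> k * Q k x else 0))"
      by (rule sum.distrib)
    also have "(\<Sum>k\<le>n. c k * A k x) = (\<Sum>k\<le>m. c (Suc k) * Q k x)"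
      unfolding m sum.atMost_Suc_shift by (simp add: A_def)
    also have "(\<Sum>k\<le>n. c k * (if k < n then \<beta> k * Q k x else 0)) = (\<Sum>k\<le>m. c k * \<beta> k * Q k x)"
      unfolding m sum.atMost_Suc by (auto intro!: sum.cong simp: algebra_simps)
    also have "(\<Sum>k\<le>m. c (Suc k) * Q k x) + (\<Sum>k\<le>m. c k * \<beta> k * Q k x) = 0"
      by (simp add: crec algebra_simps sum_negf)
    finally show ?thesis .
  qed
  have DmG0: "Dm l G = (\<lambda>x. 0)" using DmG sum0 by auto
  have Gs: "smooth G" using GE Espace_smooth by blast
  have dG1: "dn 1 G = (\<lambda>x. l * G x)"
    using fun_cong[OF DmG0] unfolding Dm_dn by (auto simp: fun_eq_iff)
  have dG: "dn j G = (\<lambda>x. l ^ j * G x)" for j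
  proof (induction j)
    case 0 then show ?case by simp
  next
    case (Suc j)
    have "dn (Suc j) G = dn j (dn 1 G)" by (simp only: dn_dn Suc_eq_plus1)
    also have "\<dots> = (\<lambda>x. l * dn j G x)" unfolding dG1 using dsc[OF Gs] by simp
    finally show ?case using Suc by (simp add: algebra_simps)
  qed
  have Ga: "G a = 1"
  proof -
    have "G a = (\<Sum>k\<le>n. if k = 0 then 1 else 0)"
      unfolding G_def
    proof (rule sum.cong)
      fix k assume k: "k \<in> {..n}"
      show "c k * P k a = (if k = 0 then 1 else 0)"
      proof (cases "k = 0")
        case True then show ?thesis using Pp[of 0] by (simp add: c_def)
      next
        case False
        then have "dn 0 (P k) a = 0" using Pp[of k] k by auto
        then show ?thesis using False by simp
      qed
    qed simp
    then show ?thesis by simp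
  qed
  have FG: "(\<lambda>x. exp (complex_of_real (x - a) * l)) = G"
  proof (rule eq_by_cheb[OF chL ab exp_Espace GE, where p="Suc n" and q=0])
    show "\<forall>j<Suc n. dn j (\<lambda>x. exp (complex_of_real (x - a) * l)) a = dn j G a"
      using exp_smooth[of a l] dG Ga by simp
  qed (use lenL' in auto)
  have cP: "c k * P k x = (-1) ^ k * (\<Prod>j<k. d j) * P k x" if "k \<le> n" "(\<forall>j<n. d j = \<beta> j)" for k x
    unfolding c_def using that by (auto intro!: prod.cong)
  have Gb: "G b = c n * P n b"
  proof -
    have "G b = (\<Sum>k\<le>n. if k = n then c n * P n b else 0)"
      unfolding G_def
    proof (rule sum.cong)
      fix k assume k: "k \<in> {..n}"
      show "c k * P k b = (if k = n then c n * P n b else 0)"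
      proof (cases "k = n")
        case True then show ?thesis by simp
      next
        case False
        then have "0 < n - k" using k by auto
        then have "dn 0 (P k) b = 0" using Pp[of k] k by blast
        then show ?thesis using False by simp
      qed
    qed simp
    then show ?thesis by simp
  qed
  have Pnb: "P n b \<noteq> 0" using Pp[of n] by simp
  have cn: "c n \<noteq> 0" using fun_cong[OF FG, of b] Gb by auto
  have \<beta>nz: "\<beta> k \<noteq> 0" if "k < n" for k
    using cn that unfolding c_def by auto
  have lim: "((\<lambda>x. vector_derivative (P k) (at x) / Q k x) \<longlongrightarrow> \<beta> k) (at b)" if k: "k < n" for k
  proof -
    define f where "f = (\<lambda>x. A k x + l * P k x)"
    have sA: "smooth (A k)" using Qs[of "k - 1"] k smooth_zero by (auto simp: A_def)
    have sP: "smooth (P k)" using Ps k by simp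
    have sf: "smooth f" unfolding f_def using smooth_add[OF sA smooth_cmult[OF sP, THEN conjunct1]] by blast
    have df: "dn j f b = dn j (A k) b + l * dn j (P k) b" for j
      unfolding f_def using dsa[OF sA smooth_cmult[OF sP, THEN conjunct1]] dsc[OF sP] by simp
    have "\<forall>j\<le>n - 1 - k. dn j f b = 0"
    proof (intro allI impI)
      fix j assume j: "j \<le> n - 1 - k"
      have "dn j (A k) b = 0"
      proof (cases "k = 0")
        case True then show ?thesis using smooth_zero by (simp add: A_def)
      next
        case False
        then show ?thesis using Qp[of "k - 1"] k j by (simp add: A_def)
      qed
      moreover have "dn j (P k) b = 0" using Pp[of k] k j by simp
      ultimately show "dn j f b = 0" using df by simp
    qed
    from ratio_zero[OF sf this Qs[OF k]] Qp[OF k]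
    have r0: "((\<lambda>x. f x / Q k x) \<longlongrightarrow> 0) (at b)" and ev: "eventually (\<lambda>x. Q k x \<noteq> 0) (at b)"
      by auto
    have vd: "vector_derivative (P k) (at x) = f x + \<beta> k * Q k x" for x
    proof -
      have "vector_derivative (P k) (at x) = dn 1 (P k) x" by (rule dn_1[symmetric])
      also have "\<dots> = R k x + l * P k x" using dR[of k 0 x] k by simp
      finally show ?thesis unfolding f_def using Rform[of k] k by simp
    qed
    have "((\<lambda>x. f x / Q k x + \<beta> k) \<longlongrightarrow> 0 + \<beta> k) (at b)"
      by (intro tendsto_add r0 tendsto_const)
    moreover have "eventually (\<lambda>x. f x / Q k x + \<beta> k = vector_derivative (P k) (at x) / Q k x) (at b)"
      using ev by (rule eventually_mono) (simp add: vd field_simps)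
    ultimately show ?thesis using Lim_transform_eventually by fastforce
  qed
  have dbeta: "d k = \<beta> k" if "k < n" for k
    unfolding d_def using tendsto_Lim[OF trivial_limit_at lim[OF that]] .
  have part1: "\<forall>k<n. ((\<lambda>x. vector_derivative (P k) (at x) / Q k x) \<longlongrightarrow> d k) (at b) \<and> d k \<noteq> 0"
    using lim dbeta \<beta>nz by simp
  have part2: "\<forall>x. exp (complex_of_real (x - a) * lam n)
            = P 0 x + (\<Sum>k=1..n. (-1) ^ k * (\<Prod>j<k. d j) * P k x)"
  proof
    fix x
    have "exp (complex_of_real (x - a) * lam n) = G x" using fun_cong[OF FG, of x] l_def by simp
    also have "\<dots> = c 0 * P 0 x + (\<Sum>k=1..n. c k * P k x)"
    proof -
      have "{..n} = insert 0 {1..n}" by auto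
      then show ?thesis unfolding G_def by simp
    qed
    also have "\<dots> = P 0 x + (\<Sum>k=1..n. (-1) ^ k * (\<Prod>j<k. d j) * P k x)"
      using cP dbeta by (auto simp: c_def intro!: sum.cong)
    finally show "exp (complex_of_real (x - a) * lam n) = P 0 x + (\<Sum>k=1..n. (-1) ^ k * (\<Prod>j<k. d j) * P k x)" .
  qed
  have part3: "\<forall>k\<in>{1..n-1}. (\<Prod>j<k. d j)
            = (-1) ^ n * (exp (complex_of_real (b - a) * lam n) / P n b) * (1 / (\<Prod>j=k..n-1. d j))"
  proof
    fix k assume k: "k \<in> {1..n-1}"
    define X where "X = (\<Prod>j<k. \<beta> j)"
    define Y where "Y = (\<Prod>j=k..n-1. \<beta> j)"
    have dX: "(\<Prod>j<k. d j) = X" unfolding X_def using k dbeta by (auto intro!: prod.cong)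
    have dY: "(\<Prod>j=k..n-1. d j) = Y" unfolding Y_def using k dbeta by (auto intro!: prod.cong)
    have Ynz: "Y \<noteq> 0" unfolding Y_def using \<beta>nz k by auto
    have "{..<n} = {..<k} \<union> {k..n-1}" using k by auto
    then have XY: "(\<Prod>j<n. \<beta> j) = X * Y" unfolding X_def Y_def
      by (simp add: prod.union_disjoint ivl_disj_int)
    have "exp (complex_of_real (b - a) * lam n) / P n b = c n"
      using fun_cong[OF FG, of b] Gb Pnb l_def by (simp add: field_simps)
    also have "\<dots> = (-1) ^ n * (X * Y)" unfolding c_def XY ..
    finally have e: "exp (complex_of_real (b - a) * lam n) / P n b = (-1) ^ n * (X * Y)" .
    have "(-1) ^ n * ((-1) ^ n * (X * Y)) * (1 / Y) = ((-1) ^ n * (-1) ^ n) * X * (Y / Y)"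
      by (simp add: algebra_simps)
    also have "\<dots> = X" using Ynz by (simp flip: power_mult_distrib)
    finally show "(\<Prod>j<k. d j) = (-1) ^ n * (exp (complex_of_real (b - a) * lam n) / P n b) * (1 / (\<Prod>j=k..n-1. d j))"
      unfolding dX dY e by simp
  qed
  show ?thesis using part1 part2 part3 by blast
qed


end
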